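(* Let $\lambda$ be a strict partition and $c$ an integer with $1\le c<\ell(\lambda)$. Then the expected number of horizontal adjacencies lying in column $c$ of a uniformly random shifted standard Young tableau of shape $[\lambda]^{\mathrm{sh}}$ equals $1$.
   Context: For strict $\lambda=(\lambda_1>\dots>\lambda_\ell>0)$, $[\lambda]^{\mathrm{sh}}=\{(i,j+i-1):i\in[\ell],j\in[\lambda_i]\}$ (row $i$, column $j$). A shifted standard Young tableau is a bijection $T:[\lambda]^{\mathrm{sh}}\to[|\lambda|]$ increasing along rows and columns. For $u=(i,j)$, $(T,u)$ is a horizontal adjacency if $(i,j+1)\in[\lambda]^{\mathrm{sh}}$ and $T(i,j+1)=T(u)+1$; it lies in column $j$. *)

theory Defs
  imports Complex_Main
begin

text \<open>A strict partition is a strictly decreasing list of positive naturals;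
  lam ! (i-1) is the part lambda_i (rows are 1-indexed).\<close>
definition strict_partition :: "nat list \<Rightarrow> bool" where
  "strict_partition lam \<longleftrightarrow> sorted_wrt (>) lam \<and> 0 \<notin> set lam"

definition shifted_diagram :: "nat list \<Rightarrow> (nat \<times> nat) set" where
  "shifted_diagram lam =
     {(i, j + i - 1) | i j. 1 \<le> i \<and> i \<le> length lam \<and> 1 \<le> j \<and> j \<le> lam ! (i - 1)}"

definition shifted_SYT :: "nat list \<Rightarrow> ((nat \<times> nat) \<Rightarrow> nat) set" where
  "shifted_SYT lam =
     {T. bij_betw T (shifted_diagram lam) {1..sum_list lam}
       \<and> (\<forall>u. u \<notin> shifted_diagram lam \<longrightarrow> T u = 0)
       \<and> (\<forall>i j. (i, j) \<in> shifted_diagram lam \<longrightarrow> (i, j + 1) \<in> shifted_diagram lam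
                \<longrightarrow> T (i, j) < T (i, j + 1))
       \<and> (\<forall>i j. (i, j) \<in> shifted_diagram lam \<longrightarrow> (i + 1, j) \<in> shifted_diagram lam
                \<longrightarrow> T (i, j) < T (i + 1, j))}"

definition horizontal_adjacency :: "nat list \<Rightarrow> ((nat \<times> nat) \<Rightarrow> nat) \<Rightarrow> nat \<times> nat \<Rightarrow> bool" where
  "horizontal_adjacency lam T u \<longleftrightarrow>
     u \<in> shifted_diagram lam \<and> (fst u, snd u + 1) \<in> shifted_diagram lam
     \<and> T (fst u, snd u + 1) = T u + 1"

definition hadj_in_column :: "nat list \<Rightarrow> ((nat \<times> nat) \<Rightarrow> nat) \<Rightarrow> nat \<Rightarrow> nat" where
  "hadj_in_column lam T c =
     card {u \<in> shifted_diagram lam. snd u = c \<and> horizontal_adjacency lam T u}"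

end

theory Submission imports Defs begin

lemma diag_iff:
  "(a,b) \<in> shifted_diagram lam \<longleftrightarrow> 1 \<le> a \<and> a \<le> length lam \<and> a \<le> b \<and> b < a + lam ! (a - 1)"
proof
  assume "(a,b) \<in> shifted_diagram lam"
  then obtain i j where "a = i" "b = j + i - 1" "1 \<le> i" "i \<le> length lam" "1 \<le> j" "j \<le> lam ! (i - 1)"
    unfolding shifted_diagram_def by blast
  then show "1 \<le> a \<and> a \<le> length lam \<and> a \<le> b \<and> b < a + lam ! (a - 1)" by auto
next
  assume h: "1 \<le> a \<and> a \<le> length lam \<and> a \<le> b \<and> b < a + lam ! (a - 1)"
  show "(a,b) \<in> shifted_diagram lam" unfolding shifted_diagram_def mem_Collect_eq
    apply (rule exI[of _ a], rule exI[of _ "b-a+1"]) using h by auto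
qed

lemma sdec_bound: "sorted_wrt (>) xs \<Longrightarrow> 0 \<notin> set xs \<Longrightarrow> i < length xs \<Longrightarrow> length xs \<le> xs ! i + i"
proof (induction xs arbitrary: i)
  case Nil then show ?case by simp
next
  case (Cons x ys)
  show ?case
  proof (cases i)
    case 0
    show ?thesis
    proof (cases ys)
      case Nil then show ?thesis using Cons.prems 0 by (cases x) auto
    next
      case (Cons y zs)
      have "length ys \<le> ys ! 0 + 0" using Cons.IH[of 0] Cons.prems \<open>ys = y#zs\<close> by auto
      moreover have "ys ! 0 < x" using Cons.prems \<open>ys = y#zs\<close> by auto
      ultimately show ?thesis using 0 by simp
    qed
  next
    case (Suc i')
    then show ?thesis using Cons.IH[of i'] Cons.prems by auto
  qed
qed

lemma diag_right:
  assumes sp: "strict_partition lam" and "c < length lam" and "(i,j) \<in> shifted_diagram lam" and "j \<le> c"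
  shows "(i, j+1) \<in> shifted_diagram lam"
proof -
  have h: "1 \<le> i" "i \<le> length lam" "i \<le> j" "j < i + lam ! (i - 1)" using assms(3) diag_iff by auto
  have "length lam \<le> lam ! (i-1) + (i-1)"
    using sdec_bound[of lam "i-1"] sp h unfolding strict_partition_def by auto
  then show ?thesis using h assms diag_iff by auto
qed

lemma diag_left_up:
  assumes sp: "strict_partition lam" and "(i,j) \<in> shifted_diagram lam" and "2 \<le> j"
  shows "(i, j-1) \<in> shifted_diagram lam \<or> (i-1, j) \<in> shifted_diagram lam"
proof -
  have h: "1 \<le> i" "i \<le> length lam" "i \<le> j" "j < i + lam ! (i - 1)" using assms(2) diag_iff by auto
  show ?thesis
  proof (cases "i < j")
    case True then show ?thesis using h diag_iff by auto
  next
    case False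
    then have ij: "i = j" using h by auto
    have "lam ! (i-1) \<in> set lam" using h by auto
    then have "lam ! (i-1) \<noteq> 0" using sp unfolding strict_partition_def by metis
    moreover have "lam ! (i-1) < lam ! (i-2)"
      using sp unfolding strict_partition_def
      using sorted_wrt_nth_less[of "(>)" lam "i-2" "i-1"] h ij assms(3) by auto
    ultimately have "2 \<le> lam ! (i - 1 - 1)" by (simp add: numeral_2_eq_2)
    then show ?thesis using h ij assms(3) diag_iff[of "i-1" j lam] by auto
  qed
qed


definition tau :: "nat \<Rightarrow> nat \<Rightarrow> nat" where
  "tau k x = (if x = k then Suc k else if x = Suc k then k else x)"
definition sw :: "nat \<Rightarrow> ((nat\<times>nat)\<Rightarrow>nat) \<Rightarrow> ((nat\<times>nat)\<Rightarrow>nat)" where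
  "sw k T = (\<lambda>u. tau k (T u))"
definition pos :: "nat list \<Rightarrow> ((nat\<times>nat)\<Rightarrow>nat) \<Rightarrow> nat \<Rightarrow> nat \<times> nat" where
  "pos lam T k = inv_into (shifted_diagram lam) T k"
definition gg :: "nat \<Rightarrow> nat \<times> nat \<Rightarrow> real" where
  "gg c u = (if c < snd u then 1 else 0)"
definition phi :: "nat list \<Rightarrow> nat \<Rightarrow> ((nat\<times>nat)\<Rightarrow>nat) \<Rightarrow> nat \<Rightarrow> real" where
  "phi lam c T k = gg c (pos lam T (Suc k)) - gg c (pos lam T k)"

lemma tau_inj: "tau k x = tau k y \<Longrightarrow> x = y"
  unfolding tau_def by (auto split: if_splits)

lemma tau_tau: "tau k (tau k x) = x"
  unfolding tau_def by auto

lemma tau_less: "a < b \<Longrightarrow> \<not> (a = k \<and> b = Suc k) \<Longrightarrow> tau k a < tau k b"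
  unfolding tau_def by auto

lemma sw_sw: "sw k (sw k T) = T"
  unfolding sw_def by (simp add: tau_tau)

lemma SYT_D:
  assumes "T \<in> shifted_SYT lam"
  shows "inj_on T (shifted_diagram lam)" "T ` shifted_diagram lam = {1..sum_list lam}"
    "\<And>u. u \<notin> shifted_diagram lam \<Longrightarrow> T u = 0"
    "\<And>i j. (i, j) \<in> shifted_diagram lam \<Longrightarrow> (i, j + 1) \<in> shifted_diagram lam \<Longrightarrow> T (i, j) < T (i, j + 1)"
    "\<And>i j. (i, j) \<in> shifted_diagram lam \<Longrightarrow> (i + 1, j) \<in> shifted_diagram lam \<Longrightarrow> T (i, j) < T (i + 1, j)"
  using assms unfolding shifted_SYT_def bij_betw_def by auto

lemma pos_in:
  assumes "T \<in> shifted_SYT lam" "k \<in> {1..sum_list lam}"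
  shows "pos lam T k \<in> shifted_diagram lam" "T (pos lam T k) = k"
  using SYT_D[OF assms(1)] assms(2) unfolding pos_def
  by (metis inv_into_into, metis f_inv_into_f)

lemma pos_eq:
  assumes "inj_on T (shifted_diagram lam)" "u \<in> shifted_diagram lam" "T u = k"
  shows "pos lam T k = u"
  using assms unfolding pos_def by (simp add: inv_into_f_eq)

lemma sw_inj: "inj_on T A \<Longrightarrow> inj_on (sw k T) A"
  unfolding sw_def inj_on_def using tau_inj by blast

lemma pos_sw:
  assumes "T \<in> shifted_SYT lam" "1 \<le> k" "k < sum_list lam"
  shows "pos lam (sw k T) k = pos lam T (Suc k)" "pos lam (sw k T) (Suc k) = pos lam T k"
proof -
  have i: "inj_on (sw k T) (shifted_diagram lam)" using sw_inj SYT_D(1)[OF assms(1)] by blast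
  show "pos lam (sw k T) k = pos lam T (Suc k)"
    using pos_in[OF assms(1), of "Suc k"] assms by (intro pos_eq[OF i]) (auto simp: sw_def tau_def)
  show "pos lam (sw k T) (Suc k) = pos lam T k"
    using pos_in[OF assms(1), of "k"] assms by (intro pos_eq[OF i]) (auto simp: sw_def tau_def)
qed

lemma phi_sw:
  assumes "T \<in> shifted_SYT lam" "1 \<le> k" "k < sum_list lam"
  shows "phi lam c (sw k T) k = - phi lam c T k"
  using pos_sw[OF assms] unfolding phi_def by simp

lemma sw_in_SYT:
  assumes T: "T \<in> shifted_SYT lam" and k: "1 \<le> k" "k < sum_list lam"
    and nh: "\<And>i j. (i, j) \<in> shifted_diagram lam \<Longrightarrow> (i, j + 1) \<in> shifted_diagram lam \<Longrightarrow> \<not> (T (i,j) = k \<and> T (i, j+1) = Suc k)"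
    and nv: "\<And>i j. (i, j) \<in> shifted_diagram lam \<Longrightarrow> (i + 1, j) \<in> shifted_diagram lam \<Longrightarrow> \<not> (T (i,j) = k \<and> T (i+1, j) = Suc k)"
  shows "sw k T \<in> shifted_SYT lam"
proof -
  note D = SYT_D[OF T]
  have bt: "bij_betw (tau k) {1..sum_list lam} {1..sum_list lam}"
    by (rule bij_betw_byWitness[of _ "tau k"]) (use k in \<open>auto simp: tau_def\<close>)
  have "bij_betw T (shifted_diagram lam) {1..sum_list lam}" using D(1,2) by (simp add: bij_betw_def)
  then have "bij_betw (tau k \<circ> T) (shifted_diagram lam) {1..sum_list lam}"
    using bt by (rule bij_betw_trans)
  then have b: "bij_betw (sw k T) (shifted_diagram lam) {1..sum_list lam}"
    by (simp add: sw_def comp_def)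
  show ?thesis unfolding shifted_SYT_def mem_Collect_eq
    using b D(3-5) nh nv k unfolding sw_def
    by (auto intro!: tau_less simp: tau_def[of k 0])
qed


lemma n_pos: assumes "strict_partition lam" "c < length lam" shows "1 \<le> sum_list lam"
proof -
  have "lam ! 0 \<in> set lam" using assms by (intro nth_mem) auto
  then have "lam ! 0 \<noteq> 0" using assms(1) unfolding strict_partition_def by metis
  moreover have "lam ! 0 \<le> sum_list lam" using assms by (intro elem_le_sum_list) auto
  ultimately show ?thesis by linarith
qed

lemma tele:
  assumes sp: "strict_partition lam" and c: "1 \<le> c" "c < length lam" and T: "T \<in> shifted_SYT lam"
  shows "(\<Sum>k\<in>{1..<sum_list lam}. phi lam c T k) = 1"
proof -
  define n where "n = sum_list lam"
  have n1: "1 \<le> n" using n_pos[OF sp c(2)] n_def by simp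
  note D = SYT_D[OF T]
  define G where "G k = gg c (pos lam T k)" for k
  have "(\<Sum>k\<in>{1..<n}. phi lam c T k) = (\<Sum>k=1..n-1. G (Suc k) - G k)"
    using n1 by (intro sum.cong) (auto simp: phi_def G_def)
  also have "\<dots> = G n - G 1" using n1 by (subst sum_Suc_diff) auto
  also have "G n = 1"
  proof -
    obtain i j where ij: "pos lam T n = (i,j)" by fastforce
    have inD: "(i,j) \<in> shifted_diagram lam" "T (i,j) = n"
      using pos_in[OF T, of n] n1 ij n_def by auto
    have "c < j"
    proof (rule ccontr)
      assume "\<not> c < j"
      then have "(i,j+1) \<in> shifted_diagram lam" using diag_right[OF sp c(2) inD(1)] by auto
      moreover have "T (i, j+1) \<le> n" using calculation D(2) n_def by auto
      ultimately show False using D(4)[OF inD(1)] inD(2) by auto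
    qed
    then show ?thesis using ij by (simp add: G_def gg_def)
  qed
  also have "G 1 = 0"
  proof -
    obtain i j where ij: "pos lam T 1 = (i,j)" by fastforce
    have inD: "(i,j) \<in> shifted_diagram lam" "T (i,j) = 1"
      using pos_in[OF T, of 1] n1 ij n_def by auto
    have "\<not> c < j"
    proof
      assume "c < j"
      then have "(i, j-1) \<in> shifted_diagram lam \<or> (i-1, j) \<in> shifted_diagram lam"
        using diag_left_up[OF sp inD(1)] c by auto
      then show False
      proof
        assume a: "(i, j-1) \<in> shifted_diagram lam"
        have "T (i, j-1) < T (i, j - 1 + 1)" using D(4)[OF a] \<open>c<j\<close> inD by simp
        moreover have "T (i, j-1) \<ge> 1" using a D(2) by auto
        ultimately show False using \<open>c<j\<close> inD by simp
      next
        assume a: "(i-1, j) \<in> shifted_diagram lam"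
        have "1 \<le> i - 1" using a diag_iff by auto
        then have "T (i-1, j) < T (i - 1 + 1, j)" using D(5)[OF a] inD by simp
        moreover have "T (i-1, j) \<ge> 1" using a D(2) by auto
        ultimately show False using \<open>1 \<le> i - 1\<close> inD by simp
      qed
    qed
    then show ?thesis using ij by (simp add: G_def gg_def)
  qed
  finally show ?thesis using n_def by simp
qed

lemma nonsw_sum:
  assumes T: "T \<in> shifted_SYT lam"
  shows "(\<Sum>k\<in>{k\<in>{1..<sum_list lam}. sw k T \<notin> shifted_SYT lam}. phi lam c T k) = real (hadj_in_column lam T c)"
proof -
  note D = SYT_D[OF T]
  define A where "A = {u \<in> shifted_diagram lam. snd u = c \<and> horizontal_adjacency lam T u}"
  define K where "K = {k\<in>{1..<sum_list lam}. sw k T \<notin> shifted_SYT lam}"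
  have sub: "T ` A \<subseteq> K"
  proof
    fix k assume "k \<in> T ` A"
    then obtain i j where u: "(i,j) \<in> A" "k = T (i,j)" by auto
    have h: "(i,j) \<in> shifted_diagram lam" "(i,j+1) \<in> shifted_diagram lam" "T (i,j+1) = Suc k"
      using u unfolding A_def horizontal_adjacency_def by auto
    have "T (i,j) \<in> T ` shifted_diagram lam" "T (i,j+1) \<in> T ` shifted_diagram lam"
      using h(1,2) by simp_all
    then have k1: "k \<in> {1..sum_list lam}" "Suc k \<in> {1..sum_list lam}" using h(3) u(2) D(2) by simp_all
    have "sw k T \<notin> shifted_SYT lam"
    proof
      assume "sw k T \<in> shifted_SYT lam"
      from SYT_D(4)[OF this h(1,2)] show False using h u by (simp add: sw_def tau_def)
    qed
    then show "k \<in> K" using k1 unfolding K_def by auto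
  qed
  have ind: "phi lam c T k = (if k \<in> T ` A then 1 else 0)" if kK: "k \<in> K" for k
  proof -
    have k: "1 \<le> k" "k < sum_list lam" "sw k T \<notin> shifted_SYT lam" using kK K_def by auto
    have "\<exists>i j. ((i, j) \<in> shifted_diagram lam \<and> (i, j + 1) \<in> shifted_diagram lam \<and> T (i,j) = k \<and> T (i, j+1) = Suc k)
       \<or> ((i, j) \<in> shifted_diagram lam \<and> (i + 1, j) \<in> shifted_diagram lam \<and> T (i,j) = k \<and> T (i+1, j) = Suc k)"
    proof (rule ccontr)
      assume a: "\<not> (\<exists>i j. ((i, j) \<in> shifted_diagram lam \<and> (i, j + 1) \<in> shifted_diagram lam \<and> T (i,j) = k \<and> T (i, j+1) = Suc k)
       \<or> ((i, j) \<in> shifted_diagram lam \<and> (i + 1, j) \<in> shifted_diagram lam \<and> T (i,j) = k \<and> T (i+1, j) = Suc k))"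
      have "sw k T \<in> shifted_SYT lam"
        by (rule sw_in_SYT[OF T k(1,2)]) (use a in blast)+
      with k(3) show False by simp
    qed
    then obtain i j where
      "((i, j) \<in> shifted_diagram lam \<and> (i, j + 1) \<in> shifted_diagram lam \<and> T (i,j) = k \<and> T (i, j+1) = Suc k)
       \<or> ((i, j) \<in> shifted_diagram lam \<and> (i + 1, j) \<in> shifted_diagram lam \<and> T (i,j) = k \<and> T (i+1, j) = Suc k)"
      by blast
    then show ?thesis
    proof
      assume h: "(i, j) \<in> shifted_diagram lam \<and> (i, j + 1) \<in> shifted_diagram lam \<and> T (i,j) = k \<and> T (i, j+1) = Suc k"
      have p: "pos lam T k = (i,j)" "pos lam T (Suc k) = (i,j+1)"
        using h pos_eq[OF D(1)] by auto
      show ?thesis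
      proof (cases "j = c")
        case True
        then have "(i,j) \<in> A" using h unfolding A_def horizontal_adjacency_def by auto
        then have "k \<in> T ` A" using h by (metis imageI)
        then show ?thesis using p True by (simp add: phi_def gg_def)
      next
        case False
        have "k \<notin> T ` A"
        proof
          assume "k \<in> T ` A"
          then obtain u where "u \<in> A" "T u = k" by auto
          then have "u = (i,j)" using h by (intro inj_onD[OF D(1)]) (auto simp: A_def)
          then show False using \<open>u \<in> A\<close> False unfolding A_def by auto
        qed
        then show ?thesis using p False by (auto simp: phi_def gg_def)
      qed
    next
      assume h: "(i, j) \<in> shifted_diagram lam \<and> (i + 1, j) \<in> shifted_diagram lam \<and> T (i,j) = k \<and> T (i+1, j) = Suc k"
      have p: "pos lam T k = (i,j)" "pos lam T (Suc k) = (i+1,j)"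
        using h pos_eq[OF D(1)] by auto
      have "k \<notin> T ` A"
      proof
        assume "k \<in> T ` A"
        then obtain u where "u \<in> A" "T u = k" by auto
        then have "u = (i,j)" using h by (intro inj_onD[OF D(1)]) (auto simp: A_def)
        then have "(i,j+1) \<in> shifted_diagram lam" "T (i,j+1) = Suc k"
          using \<open>u \<in> A\<close> h unfolding A_def horizontal_adjacency_def by auto
        then have "(i,j+1) = (i+1,j)" using h by (intro inj_onD[OF D(1)]) auto
        then show False by simp
      qed
      then show ?thesis using p by (auto simp: phi_def gg_def)
    qed
  qed
  have "(\<Sum>k\<in>K. phi lam c T k) = (\<Sum>k\<in>K. if k \<in> T ` A then 1 else 0)"
    using ind by (intro sum.cong) auto
  also have "\<dots> = (\<Sum>k\<in>K \<inter> T ` A. 1)"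
    by (subst sum.inter_restrict) (auto simp: K_def)
  also have "K \<inter> T ` A = T ` A" using sub by auto
  also have "(\<Sum>k\<in>T ` A. (1::real)) = real (card (T ` A))" by simp
  also have "card (T ` A) = card A"
    by (rule card_image, rule inj_on_subset[OF D(1)]) (auto simp: A_def)
  finally show ?thesis unfolding K_def A_def hadj_in_column_def by simp
qed

lemma s_mono: "m \<le> m' \<Longrightarrow> sum_list (take m (xs::nat list)) \<le> sum_list (take m' xs)"
proof -
  assume "m \<le> m'"
  then have "take m' xs = take m xs @ take (m'-m) (drop m xs)"
    using take_add[of m "m'-m" xs] by simp
  then show ?thesis by simp
qed

lemma s_step: "a < length xs \<Longrightarrow> sum_list (take (Suc a) (xs::nat list)) = sum_list (take a xs) + xs ! a"
  by (simp add: take_Suc_conv_app_nth)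

definition T0 :: "nat list \<Rightarrow> (nat \<times> nat) \<Rightarrow> nat" where
  "T0 lam u = (if u \<in> shifted_diagram lam then sum_list (take (fst u - 1) lam) + (snd u - fst u + 1) else 0)"

lemma T0_bounds:
  assumes "(a,b) \<in> shifted_diagram lam"
  shows "sum_list (take (a-1) lam) < T0 lam (a,b)" "T0 lam (a,b) \<le> sum_list (take a lam)"
proof -
  have h: "1 \<le> a" "a \<le> length lam" "a \<le> b" "b < a + lam ! (a - 1)" using assms diag_iff by auto
  have "sum_list (take a lam) = sum_list (take (a-1) lam) + lam ! (a-1)"
    using s_step[of "a-1" lam] h by simp
  then show "sum_list (take (a-1) lam) < T0 lam (a,b)" "T0 lam (a,b) \<le> sum_list (take a lam)"
    using assms h by (auto simp: T0_def)
qed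

lemma diag_UN: "shifted_diagram lam = (\<Union>a\<in>{1..length lam}. {a} \<times> {a..<a + lam ! (a-1)})"
  by (auto simp: diag_iff)

lemma diag_finite: "finite (shifted_diagram lam)"
  by (simp add: diag_UN)

lemma diag_card: "card (shifted_diagram lam) = sum_list lam"
proof -
  have "card (shifted_diagram lam) = (\<Sum>a\<in>{1..length lam}. card ({a} \<times> {a..<a + lam ! (a-1)}))"
    unfolding diag_UN by (rule card_UN_disjoint) auto
  also have "\<dots> = (\<Sum>a\<in>{1..length lam}. lam ! (a-1))" by (simp add: card_cartesian_product)
  also have "\<dots> = (\<Sum>k<length lam. lam ! k)"
    using sum.atLeast1_atMost_eq[of "\<lambda>a. lam ! (a-1)" "length lam"] by simp
  also have "\<dots> = sum_list lam" by (simp add: sum_list_sum_nth atLeast0LessThan)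
  finally show ?thesis .
qed

lemma T0_SYT: "T0 lam \<in> shifted_SYT lam"
proof -
  let ?D = "shifted_diagram lam"
  have inj: "inj_on (T0 lam) ?D"
  proof (rule inj_onI)
    fix u v assume uv: "u \<in> ?D" "v \<in> ?D" "T0 lam u = T0 lam v"
    obtain a b where u: "u = (a,b)" by fastforce
    obtain a' b' where v: "v = (a',b')" by fastforce
    have uD: "(a,b) \<in> ?D" and vD: "(a',b') \<in> ?D" and eq: "T0 lam (a,b) = T0 lam (a',b')" using uv u v by auto
    have "\<not> a < a'"
    proof
      assume "a < a'"
      have "T0 lam (a,b) \<le> sum_list (take a lam)" using T0_bounds(2)[OF uD] by simp
      also have "\<dots> \<le> sum_list (take (a'-1) lam)" using \<open>a < a'\<close> by (intro s_mono) auto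
      also have "\<dots> < T0 lam (a',b')" using T0_bounds(1)[OF vD] by simp
      finally show False using eq by simp
    qed
    moreover have "\<not> a' < a"
    proof
      assume "a' < a"
      have "T0 lam (a',b') \<le> sum_list (take a' lam)" using T0_bounds(2)[OF vD] by simp
      also have "\<dots> \<le> sum_list (take (a-1) lam)" using \<open>a' < a\<close> by (intro s_mono) auto
      also have "\<dots> < T0 lam (a,b)" using T0_bounds(1)[OF uD] by simp
      finally show False using eq by simp
    qed
    ultimately have "a = a'" by simp
    then show "u = v" using uv u v diag_iff[of a b lam] diag_iff[of a' b' lam] by (auto simp: T0_def)
  qed
  have sub: "T0 lam ` ?D \<subseteq> {1..sum_list lam}"
  proof
    fix k assume "k \<in> T0 lam ` ?D"
    then obtain a b where ab: "(a,b) \<in> ?D" "k = T0 lam (a,b)" by auto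
    have "a \<le> length lam" using ab diag_iff by auto
    then have "sum_list (take a lam) \<le> sum_list lam" using s_mono[of a "length lam" lam] by simp
    then show "k \<in> {1..sum_list lam}" using T0_bounds[OF ab(1)] ab by auto
  qed
  have "card (T0 lam ` ?D) = card {1..sum_list lam}"
    using card_image[OF inj] diag_card by simp
  then have im: "T0 lam ` ?D = {1..sum_list lam}" using sub by (intro card_subset_eq) auto
  have col: "T0 lam (i,j) < T0 lam (i+1,j)" if "(i,j) \<in> ?D" "(i+1,j) \<in> ?D" for i j
    using T0_bounds(2)[OF that(1)] T0_bounds(1)[OF that(2)] by simp
  have row: "T0 lam (i,j) < T0 lam (i,j+1)" if "(i,j) \<in> ?D" "(i,j+1) \<in> ?D" for i j
    using that diag_iff[of i j lam] by (auto simp: T0_def)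
  show ?thesis unfolding shifted_SYT_def bij_betw_def using inj im col row by (auto simp: T0_def)
qed

lemma SYT_finite: "finite (shifted_SYT lam)"
proof -
  have "shifted_SYT lam \<subseteq> {f. \<forall>x. (x \<in> shifted_diagram lam \<longrightarrow> f x \<in> {1..sum_list lam}) \<and> (x \<notin> shifted_diagram lam \<longrightarrow> f x = 0)}"
    unfolding shifted_SYT_def bij_betw_def by auto
  moreover have "finite {f. \<forall>x. (x \<in> shifted_diagram lam \<longrightarrow> f x \<in> {1..sum_list lam}) \<and> (x \<notin> shifted_diagram lam \<longrightarrow> (f x::nat) = 0)}"
    by (intro finite_set_of_finite_funs diag_finite) simp
  ultimately show ?thesis by (rule finite_subset)
qed

theorem mainTheorem14:
  fixes lam :: "nat list" and c :: nat
  assumes "strict_partition lam" and "1 \<le> c" and "c < length lam"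
  shows "(\<Sum>T\<in>shifted_SYT lam. real (hadj_in_column lam T c)) / real (card (shifted_SYT lam)) = 1"
proof -
  define S where "S = shifted_SYT lam"
  define K where "K = {1..<sum_list lam}"
  define N where "N = {p \<in> S \<times> K. sw (snd p) (fst p) \<in> S}"
  define f where "f p = phi lam c (fst p) (snd p)" for p
  have finS: "finite S" using SYT_finite S_def by simp
  have finSK: "finite (S \<times> K)" using finS K_def by simp
  have N0: "sum f N = 0"
  proof -
    define h where "h p = (sw (snd p) (fst p), snd p)" for p
    have "sum f N = sum (\<lambda>p. f (h p)) N"
      by (rule sum.reindex_bij_witness[of N h h]) (auto simp: h_def N_def sw_sw)
    also have "\<dots> = sum (\<lambda>p. - f p) N"
    proof (rule sum.cong)
      fix p assume "p \<in> N"
      then show "f (h p) = - f p"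
        using phi_sw[of "fst p" lam "snd p" c] unfolding N_def K_def S_def f_def h_def by auto
    qed simp
    finally show ?thesis by (simp add: sum_negf)
  qed
  have split: "S \<times> K - N = Sigma S (\<lambda>T. {k\<in>K. sw k T \<notin> S})" by (auto simp: N_def)
  have "sum f (S \<times> K) = sum f (S \<times> K - N) + sum f N"
    by (rule sum.subset_diff) (auto simp: N_def finSK)
  also have "sum f (S \<times> K - N) = (\<Sum>T\<in>S. \<Sum>k\<in>{k\<in>K. sw k T \<notin> S}. phi lam c T k)"
    unfolding split f_def using finS K_def by (subst sum.Sigma) (auto simp: split_def)
  also have "\<dots> = (\<Sum>T\<in>S. real (hadj_in_column lam T c))"
    using nonsw_sum unfolding S_def K_def by (intro sum.cong) auto
  finally have e1: "sum f (S \<times> K) = (\<Sum>T\<in>S. real (hadj_in_column lam T c))" using N0 by simp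
  have "sum f (S \<times> K) = (\<Sum>T\<in>S. \<Sum>k\<in>K. phi lam c T k)"
    unfolding f_def by (simp add: sum.cartesian_product split_def)
  also have "\<dots> = (\<Sum>T\<in>S. 1)"
    using tele[OF assms] unfolding S_def K_def by (intro sum.cong) auto
  also have "\<dots> = real (card S)" by simp
  finally have e2: "(\<Sum>T\<in>S. real (hadj_in_column lam T c)) = real (card S)" using e1 by simp
  have "card S > 0" using T0_SYT finS S_def card_gt_0_iff by blast
  then show ?thesis using e2 S_def by simp
qed

end
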